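(* Let $d\ge c\ge 1$ be integers and let $W\in\mathbb{R}^{c\times d}$ satisfy $WW^T=I_c$. Let $\Sigma\in\mathbb{R}^{c\times c}$ be symmetric positive definite and let $R\in\mathcal{O}(c)$ be an orthogonal matrix such that every diagonal coefficient of $R\Sigma R^T$ equals $\operatorname{Tr}(\Sigma)/c$. Let $\epsilon>0$ and let $x_{t_1},x_{t_2}$ be random vectors in $\mathbb{R}^d$ such that $Wx_{t_1}\sim\mathcal{N}(\mathbf{0},\Sigma)$, $Wx_{t_2}\sim\mathcal{N}(\mathbf{0},\Sigma)$ and $\|x_{t_1}-x_{t_2}\|_2\le\epsilon$ almost surely. Let $b_{t_j}=\operatorname{sign}(RWx_{t_j})\in\{-1,1\}^c$ for $j\in\{1,2\}$. Then $$\mathbb{P}\big[\operatorname{dist}_H(b_{t_1},b_{t_2})>0\big]\ \le\ 2\epsilon\sqrt{\frac{2}{\pi}}\;c^{3/2}\,\big(\operatorname{Tr}(\Sigma)\big)^{-1/2}.$$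
   Context: $\operatorname{sign}(x)=1$ if $x\ge 0$ and $-1$ otherwise, applied component-wise to vectors. $\operatorname{dist}_H$ is the Hamming distance (number of coordinates in which two vectors differ). $\mathcal{O}(c)$ is the set of $c\times c$ real orthogonal matrices; $\operatorname{Tr}$ is the trace; $I_c$ is the $c\times c$ identity matrix. *)

theory Defs
  imports "HOL-Probability.Probability"
begin

definition pos_def_matrix :: "real^'n^'n \<Rightarrow> bool" where
  "pos_def_matrix S \<longleftrightarrow> transpose S = S \<and> (\<forall>v. v \<noteq> 0 \<longrightarrow> v \<bullet> (S *v v) > 0)"

definition gaussian_density :: "real^'n^'n \<Rightarrow> real^'n \<Rightarrow> real" where
  "gaussian_density S y =
     exp (- (y \<bullet> (matrix_inv S *v y)) / 2) / sqrt ((2 * pi) ^ CARD('n) * det S)"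

definition has_normal_law :: "'a measure \<Rightarrow> ('a \<Rightarrow> real^'n) \<Rightarrow> real^'n^'n \<Rightarrow> bool" where
  "has_normal_law M X S \<longleftrightarrow> distributed M lborel X (\<lambda>y. ennreal (gaussian_density S y))"

text \<open>Componentwise sign, with sign 0 = 1.\<close>
definition sign_vec :: "real^'n \<Rightarrow> real^'n" where
  "sign_vec v = (\<chi> i. if v $ i \<ge> 0 then 1 else -1)"

definition hamming_dist :: "'b^'n \<Rightarrow> 'b^'n \<Rightarrow> nat" where
  "hamming_dist a b = card {i. a $ i \<noteq> b $ i}"

end

theory Submission imports Defs begin

lemma posdef_inv:
  fixes S :: "real^'c^'c"
  assumes "pos_def_matrix S"
  shows "matrix_inv S ** S = mat 1" "S ** matrix_inv S = mat 1"
proof -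
  have "\<forall>x. S *v x = 0 \<longrightarrow> x = 0"
    using assms unfolding pos_def_matrix_def by (metis inner_zero_right less_irrefl)
  then have "invertible S" using matrix_left_invertible_ker invertible_left_inverse by blast
  then have "S ** matrix_inv S = mat 1 \<and> matrix_inv S ** S = mat 1"
    unfolding invertible_def matrix_inv_def by (rule someI_ex)
  then show "matrix_inv S ** S = mat 1" "S ** matrix_inv S = mat 1" by auto
qed

lemma quad_shift:
  fixes S :: "real^'c^'c" and u y :: "real^'c"
  assumes "pos_def_matrix S" and vr: "vr = u \<bullet> (S *v u)" and "vr > 0"
  defines "v \<equiv> (1/vr) *\<^sub>R (S *v u)"
  shows "(y + a *\<^sub>R v) \<bullet> (matrix_inv S *v (y + a *\<^sub>R v))
        = y \<bullet> (matrix_inv S *v y) + 2 * a * (u \<bullet> y) / vr + a^2 / vr"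
proof -
  let ?T = "matrix_inv S"
  have St: "transpose S = S" using assms(1) unfolding pos_def_matrix_def by auto
  have Tv: "?T *v v = (1/vr) *\<^sub>R u"
    unfolding v_def using posdef_inv(1)[OF assms(1)]
    by (simp add: matrix_vector_mult_scaleR matrix_vector_mul_assoc)
  have tT: "transpose ?T ** S = mat 1"
    by (metis St matrix_transpose_mul posdef_inv(2)[OF assms(1)] transpose_mat)
  have vT: "v \<bullet> (?T *v y) = (1/vr) * (u \<bullet> y)"
  proof -
    have "v \<bullet> (?T *v y) = (v v* ?T) \<bullet> y"
      by (simp add: dot_lmul_matrix)
    also have "v v* ?T = transpose ?T *v v" by simp
    also have "\<dots> = (1/vr) *\<^sub>R u"
      unfolding v_def using tT
      by (simp only: matrix_vector_mult_scaleR matrix_vector_mul_assoc matrix_vector_mul_lid)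
    finally show ?thesis by simp
  qed
  have vv: "v \<bullet> (?T *v v) = 1/vr"
    using Tv assms(2,3) unfolding v_def by (simp add: inner_commute)
  have "(y + a *\<^sub>R v) \<bullet> (?T *v (y + a *\<^sub>R v)) =
     y \<bullet> (?T *v y) + a * (y \<bullet> (?T *v v)) + a * (v \<bullet> (?T *v y)) + a*a * (v \<bullet> (?T *v v))"
    by (simp add: matrix_vector_right_distrib vec.scale inner_add_left inner_add_right algebra_simps)
  also have "\<dots> = y \<bullet> (?T *v y) + 2 * a * (u \<bullet> y) / vr + a^2 / vr"
    using Tv vT vv assms(3) by (simp add: inner_commute power2_eq_square field_simps)
  finally show ?thesis .
qed

lemma gd_meas[measurable]: "gaussian_density S \<in> borel_measurable borel"
proof -
  have "gaussian_density S = (\<lambda>y. exp (- (y \<bullet> (matrix_inv S *v y)) / 2) * (1 / sqrt ((2 * pi) ^ CARD('a) * det S)))"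
    by (auto simp: gaussian_density_def fun_eq_iff)
  also have "\<dots> \<in> borel_measurable borel"
    by (intro borel_measurable_continuous_onI continuous_intros) auto
  finally show ?thesis .
qed

lemma arith1: "vr > 0 \<Longrightarrow> -((Q + 2*a*t/vr + a^2/vr))/2 = -Q/2 + (-(2*a*t + a^2) * (1/(2* vr)))" for Q a t vr :: real
  by (simp add: field_simps)

lemma gd_shift:
  fixes S :: "real^'c^'c" and u y :: "real^'c"
  assumes "pos_def_matrix S" and vr: "vr = u \<bullet> (S *v u)" and "vr > 0"
  defines "v \<equiv> (1/vr) *\<^sub>R (S *v u)"
  shows "gaussian_density S (a *\<^sub>R v + y) = gaussian_density S y * exp (-(2*a*(u \<bullet> y) + a^2) * (1/(2* vr)))"
proof -
  have q: "(a *\<^sub>R v + y) \<bullet> (matrix_inv S *v (a *\<^sub>R v + y))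
        = y \<bullet> (matrix_inv S *v y) + 2 * a * (u \<bullet> y) / vr + a^2 / vr"
    unfolding v_def using quad_shift[OF assms(1-3), of y a] by (simp only: add.commute)
  have "- ((y \<bullet> (matrix_inv S *v y) + 2 * a * (u \<bullet> y) / vr + a^2 / vr)) / 2
      = - (y \<bullet> (matrix_inv S *v y)) / 2 + (-(2*a*(u \<bullet> y) + a^2) * (1/(2* vr)))"
    by (rule arith1[OF assms(3)])
  then have "exp (- ((y \<bullet> (matrix_inv S *v y) + 2 * a * (u \<bullet> y) / vr + a^2 / vr)) / 2)
     = exp (- (y \<bullet> (matrix_inv S *v y)) / 2) * exp (-(2*a*(u \<bullet> y) + a^2) * (1/(2* vr)))"
    by (simp only: exp_add)
  then show ?thesis unfolding gaussian_density_def q by (simp only: times_divide_eq_left)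
qed

lemma exp_pair_ge: "2 * exp (-(a^2)*c) \<le> exp (-(2*a*t + a^2)*c) + exp (-(2*(-a)*t + (-a)^2)*c)"
  for a t c :: real
proof -
  define p where "p = exp (-(a^2)*c)"
  define q where "q = exp (-(2*a*t)*c)"
  have e1: "exp (-(2*a*t + a^2)*c) = p * q"
    unfolding p_def q_def exp_add[symmetric] by (simp add: algebra_simps)
  have e2: "exp (-(2*(-a)*t + (-a)^2)*c) = p / q"
    unfolding p_def q_def exp_diff[symmetric] by (simp add: algebra_simps)
  have qp: "q > 0" "p > 0" unfolding p_def q_def by auto
  have h1: "2*q \<le> q*q + 1" using sum_squares_ge_zero[of "q-1" 0]
    by (simp add: algebra_simps power2_eq_square)
  have h2: "q + 1/q = (q*q+1)/q" using qp by (simp add: add_divide_distrib)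
  have "2 \<le> q + 1/q" unfolding h2 using h1 qp by (simp add: pos_le_divide_eq)
  then have "p * 2 \<le> p * (q + 1/q)" using qp by (intro mult_left_mono) auto
  then show ?thesis unfolding e1 e2 p_def[symmetric] by (simp add: distrib_left mult.commute)
qed


lemma meas1:
  fixes u :: "real^'c"
  shows "(\<lambda>(a::real, y::real^'c). ennreal (gaussian_density S y) * indicator {y. \<bar>u \<bullet> y - a\<bar> \<le> e} y) \<in> borel_measurable (lborel \<Otimes>\<^sub>M lborel)"
  unfolding indicator_def by measurable

lemma meas2:
  fixes u :: "real^'c"
  shows "(\<lambda>(y::real^'c, a::real). ennreal (gaussian_density S y) * indicator {y. \<bar>u \<bullet> y - a\<bar> \<le> e} y) \<in> borel_measurable (lborel \<Otimes>\<^sub>M lborel)"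
  unfolding indicator_def by measurable

lemma measF:
  fixes u :: "real^'c"
  shows "(\<lambda>a::real. \<integral>\<^sup>+ y. ennreal (gaussian_density S y) * indicator {y. \<bar>u \<bullet> y - a\<bar> \<le> e} y \<partial>(lborel::(real^'c) measure)) \<in> borel_measurable lborel"
  using meas1[of S u e] by measurable

lemma gle:
  fixes vr a :: real assumes vr0: "vr > 0"
  shows "indicator {-sqrt vr..sqrt vr} a + 3/4 * indicator {-sqrt vr/2..sqrt vr/2} a \<le> 2 * exp (-(a^2) * (1/(2* vr)))"
proof -
  have sq: "sqrt vr ^ 2 = vr" using vr0 by simp
  have ex: "1 - a^2 * (1/(2* vr)) \<le> exp (-(a^2) * (1/(2* vr)))"
    using exp_ge_add_one_self[of "-(a^2) * (1/(2* vr))"] by simp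
  show ?thesis
  proof (cases "\<bar>a\<bar> \<le> sqrt vr / 2")
    case True
    then have "\<bar>a\<bar>^2 \<le> (sqrt vr / 2)^2" by (intro power_mono) auto
    then have "a^2 \<le> vr / 4" using sq by (simp add: power_divide)
    then have "a^2 * (1/(2* vr)) \<le> 1/8" using vr0 by (simp add: field_simps)
    moreover have "a \<in> {-sqrt vr..sqrt vr}" "a \<in> {-sqrt vr/2..sqrt vr/2}" using True vr0 by auto
    ultimately show ?thesis using ex by simp
  next
    case False
    show ?thesis
    proof (cases "\<bar>a\<bar> \<le> sqrt vr")
      case True
      then have "\<bar>a\<bar>^2 \<le> (sqrt vr)^2" by (intro power_mono) auto
      then have "a^2 \<le> vr" using sq by simp
      then have "a^2 * (1/(2* vr)) \<le> 1/2" using vr0 by (simp add: field_simps)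
      moreover have "a \<in> {-sqrt vr..sqrt vr}" "a \<notin> {-sqrt vr/2..sqrt vr/2}" using True False by auto
      ultimately show ?thesis using ex by simp
    next
      case False2: False
      then have "a \<notin> {-sqrt vr..sqrt vr}" "a \<notin> {-sqrt vr/2..sqrt vr/2}" using False by auto
      then show ?thesis by (simp add: less_imp_le)
    qed
  qed
qed

lemma core:
  fixes Y :: "'a \<Rightarrow> real^'c" and u :: "real^'c" and S :: "real^'c^'c"
  assumes P: "prob_space M" and Spd: "pos_def_matrix S"
    and D: "distributed M lborel Y (\<lambda>y. ennreal (gaussian_density S y))"
    and vr: "vr = u \<bullet> (S *v u)" and vr0: "vr > 0" and e: "\<epsilon> > 0"
  shows "emeasure M {\<omega> \<in> space M. \<bar>u \<bullet> Y \<omega>\<bar> \<le> \<epsilon>} \<le> ennreal (16 * \<epsilon> / (11 * sqrt vr))"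
proof -
  define f where "f = gaussian_density S"
  define v where "v = (1/vr) *\<^sub>R (S *v u)"
  define F where "F a = (\<integral>\<^sup>+ y. ennreal (f y) * indicator {y. \<bar>u \<bullet> y - a\<bar> \<le> \<epsilon>} y \<partial>(lborel::(real^'c) measure))" for a
  have Ym: "Y \<in> measurable M lborel" using distributed_measurable[OF D] .
  have Fm[measurable]: "F \<in> borel_measurable lborel" unfolding F_def f_def by (rule measF)
  have Fm'[measurable]: "F \<in> borel_measurable borel" using Fm by simp
  have uv: "u \<bullet> v = 1" unfolding v_def using vr vr0 by simp
  have E0: "emeasure M {\<omega> \<in> space M. \<bar>u \<bullet> Y \<omega>\<bar> \<le> \<epsilon>} = F 0"
  proof -
    have A: "{y. \<bar>u \<bullet> y\<bar> \<le> \<epsilon>} \<in> sets lborel" by measurable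
    have "Y -` {y. \<bar>u \<bullet> y\<bar> \<le> \<epsilon>} \<inter> space M = {\<omega> \<in> space M. \<bar>u \<bullet> Y \<omega>\<bar> \<le> \<epsilon>}" by auto
    then show ?thesis using distributed_emeasure[OF D A] unfolding F_def f_def by simp
  qed
  have tot: "(\<integral>\<^sup>+ y. ennreal (f y) \<partial>(lborel::(real^'c) measure)) = 1"
  proof -
    have "emeasure M (Y -` UNIV \<inter> space M) = (\<integral>\<^sup>+ y. ennreal (f y) * indicator UNIV y \<partial>lborel)"
      using distributed_emeasure[OF D, of UNIV] unfolding f_def by simp
    then show ?thesis using prob_space.emeasure_space_1[OF P] by simp
  qed
  have shift: "F a = (\<integral>\<^sup>+ y. ennreal (f y * exp (-(2*a*(u \<bullet> y) + a^2) * (1/(2* vr)))) * indicator {y. \<bar>u \<bullet> y\<bar> \<le> \<epsilon>} y \<partial>lborel)" for a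
  proof -
    define G where "G y = ennreal (f y) * indicator {y. \<bar>u \<bullet> y - a\<bar> \<le> \<epsilon>} y" for y
    have Gm: "G \<in> borel_measurable borel" unfolding G_def f_def indicator_def by measurable
    have "F a = (\<integral>\<^sup>+ y. G y \<partial>lborel)" unfolding F_def G_def ..
    also have "\<dots> = (\<integral>\<^sup>+ y. G y \<partial>(distr lborel borel ((+) (a *\<^sub>R v))))"
      by (simp add: lborel_distr_plus)
    also have "\<dots> = (\<integral>\<^sup>+ y. G (a *\<^sub>R v + y) \<partial>lborel)"
      by (rule nn_integral_distr) (auto simp: Gm)
    also have "\<dots> = (\<integral>\<^sup>+ y. ennreal (f y * exp (-(2*a*(u \<bullet> y) + a^2) * (1/(2* vr)))) * indicator {y. \<bar>u \<bullet> y\<bar> \<le> \<epsilon>} y \<partial>lborel)"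
    proof (rule nn_integral_cong)
      fix y :: "real^'c"
      have "u \<bullet> (a *\<^sub>R v + y) - a = u \<bullet> y" using uv by (simp add: inner_add_right)
      moreover have "f (a *\<^sub>R v + y) = f y * exp (-(2*a*(u \<bullet> y) + a^2) * (1/(2* vr)))"
        unfolding f_def v_def by (rule gd_shift[OF Spd vr vr0])
      ultimately show "G (a *\<^sub>R v + y) = ennreal (f y * exp (-(2*a*(u \<bullet> y) + a^2) * (1/(2* vr)))) * indicator {y. \<bar>u \<bullet> y\<bar> \<le> \<epsilon>} y"
        unfolding G_def indicator_def by simp
    qed
    finally show ?thesis .
  qed
  have fnn: "f y \<ge> 0" for y
  proof -
    have K: "sqrt ((2 * pi) ^ CARD('c) * det S) > 0"
    proof (rule ccontr)
      assume "\<not> ?thesis"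
      then have "f y \<le> 0" for y unfolding f_def gaussian_density_def
        by (simp add: divide_nonneg_nonpos)
      then have "(\<lambda>y. ennreal (f y)) = (\<lambda>y. 0)" by (simp add: fun_eq_iff ennreal_neg)
      then have "(\<integral>\<^sup>+ y. ennreal (f y) \<partial>(lborel::(real^'c) measure)) = 0"
        by simp
      then show False using tot by simp
    qed
    then show ?thesis unfolding f_def gaussian_density_def by simp
  qed
  have pair: "ennreal (2 * exp (-(a^2) * (1/(2* vr)))) * F 0 \<le> F a + F (-a)" for a
  proof -
    define I :: "real^'c \<Rightarrow> ennreal" where "I = indicator {y. \<bar>u \<bullet> y\<bar> \<le> \<epsilon>}"
    have Im[measurable]: "I \<in> borel_measurable lborel" unfolding I_def indicator_def by measurable
    have fm[measurable]: "f \<in> borel_measurable lborel" unfolding f_def by simp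
    have F0: "F 0 = (\<integral>\<^sup>+ y. ennreal (f y) * I y \<partial>lborel)" unfolding F_def I_def by simp
    have "ennreal (2 * exp (-(a^2) * (1/(2* vr)))) * F 0
        = (\<integral>\<^sup>+ y. ennreal (2 * exp (-(a^2) * (1/(2* vr)))) * (ennreal (f y) * I y) \<partial>lborel)"
      unfolding F0 by (rule nn_integral_cmult[symmetric]) measurable
    also have "\<dots> \<le> (\<integral>\<^sup>+ y. ennreal (f y * exp (-(2*a*(u \<bullet> y) + a^2) * (1/(2* vr)))) * I y
               + ennreal (f y * exp (-(2*(-a)*(u \<bullet> y) + (-a)^2) * (1/(2* vr)))) * I y \<partial>lborel)"
    proof (rule nn_integral_mono)
      fix y
      have "2 * exp (-(a^2) * (1/(2* vr))) * f y \<le> (exp (-(2*a*(u \<bullet> y) + a^2) * (1/(2* vr))) + exp (-(2*(-a)*(u \<bullet> y) + (-a)^2) * (1/(2* vr)))) * f y"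
        using exp_pair_ge[of a "1/(2* vr)" "u \<bullet> y"] fnn[of y] by (rule mult_right_mono)
      then have "ennreal (2 * exp (-(a^2) * (1/(2* vr)))) * ennreal (f y) \<le> ennreal (f y * exp (-(2*a*(u \<bullet> y) + a^2) * (1/(2* vr)))) + ennreal (f y * exp (-(2*(-a)*(u \<bullet> y) + (-a)^2) * (1/(2* vr))))"
        using fnn[of y] by (simp add: ennreal_mult[symmetric] ennreal_plus[symmetric] algebra_simps del: ennreal_plus)
      then show "ennreal (2 * exp (-(a^2) * (1/(2* vr)))) * (ennreal (f y) * I y) \<le> ennreal (f y * exp (-(2*a*(u \<bullet> y) + a^2) * (1/(2* vr)))) * I y
               + ennreal (f y * exp (-(2*(-a)*(u \<bullet> y) + (-a)^2) * (1/(2* vr)))) * I y"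
        unfolding I_def indicator_def by auto
    qed
    also have "\<dots> = F a + F (-a)"
      unfolding shift[of a] shift[of "-a"] I_def[symmetric]
      by (rule nn_integral_add) measurable
    finally show ?thesis .
  qed
  have fub: "(\<integral>\<^sup>+ a. F a \<partial>lborel) = ennreal (2 * \<epsilon>)"
  proof -
    have "(\<integral>\<^sup>+ a. F a \<partial>lborel) = (\<integral>\<^sup>+ a. (\<integral>\<^sup>+ y. ennreal (f y) * indicator {y. \<bar>u \<bullet> y - a\<bar> \<le> \<epsilon>} y \<partial>(lborel :: (real^'c) measure)) \<partial>(lborel :: real measure))"
      unfolding F_def ..
    also have "\<dots> = (\<integral>\<^sup>+ y. (\<integral>\<^sup>+ a. ennreal (f y) * indicator {y. \<bar>u \<bullet> y - a\<bar> \<le> \<epsilon>} y \<partial>(lborel :: real measure)) \<partial>(lborel :: (real^'c) measure))"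
      by (rule lborel_pair.Fubini') (unfold f_def, rule meas2)
    also have "\<dots> = (\<integral>\<^sup>+ y. ennreal (f y) * ennreal (2 * \<epsilon>) \<partial>(lborel :: (real^'c) measure))"
    proof (rule nn_integral_cong)
      fix y :: "real^'c"
      have "(\<lambda>a. ennreal (f y) * indicator {y. \<bar>u \<bullet> y - a\<bar> \<le> \<epsilon>} y) = (\<lambda>a. ennreal (f y) * indicator {u \<bullet> y - \<epsilon> .. u \<bullet> y + \<epsilon>} a)"
        by (auto simp: fun_eq_iff indicator_def abs_le_iff)
      then show "(\<integral>\<^sup>+ a. ennreal (f y) * indicator {y. \<bar>u \<bullet> y - a\<bar> \<le> \<epsilon>} y \<partial>(lborel :: real measure)) = ennreal (f y) * ennreal (2 * \<epsilon>)"
        using e by (simp add: nn_integral_cmult_indicator)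
    qed
    also have "\<dots> = (\<integral>\<^sup>+ y. ennreal (f y) \<partial>(lborel :: (real^'c) measure)) * ennreal (2 * \<epsilon>)"
      by (rule nn_integral_multc) (simp add: f_def)
    also have "\<dots> = ennreal (2 * \<epsilon>)" using tot by simp
    finally show ?thesis .
  qed
  have refl: "(\<integral>\<^sup>+ a. F (-a) \<partial>lborel) = ennreal (2 * \<epsilon>)"
  proof -
    have "(\<integral>\<^sup>+ a. F a \<partial>lborel) = (\<integral>\<^sup>+ a. F a \<partial>(distr lborel borel uminus))"
      by (simp add: lborel_distr_uminus)
    also have "\<dots> = (\<integral>\<^sup>+ a. F (-a) \<partial>lborel)"
      by (rule nn_integral_distr) auto
    finally show ?thesis using fub by simp
  qed
  define \<sigma> where "\<sigma> = sqrt vr"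
  have sg0: "\<sigma> > 0" unfolding \<sigma>_def using vr0 by simp
  define g :: "real \<Rightarrow> real" where "g a = indicator {-\<sigma>..\<sigma>} a + 3/4 * indicator {-\<sigma>/2..\<sigma>/2} a" for a :: real
  have gnn: "g a \<ge> 0" for a unfolding g_def by (simp add: indicator_def)
  have Fm2[measurable]: "(\<lambda>a. F (- a)) \<in> borel_measurable lborel" by measurable
  have sum: "(\<integral>\<^sup>+ a. (F a + F (-a)) \<partial>lborel) = ennreal (4 * \<epsilon>)"
    using fub refl e by (subst nn_integral_add) (auto simp: ennreal_plus[symmetric] simp del: ennreal_plus)
  have gint: "(\<integral>\<^sup>+ a. ennreal (g a) \<partial>lborel) = ennreal (11/4 * \<sigma>)"
  proof -
    have "(\<lambda>a. ennreal (g a)) = (\<lambda>a. indicator {-\<sigma>..\<sigma>} a + ennreal (3/4) * indicator {-\<sigma>/2..\<sigma>/2} a)"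
    proof -
      have e74: "1 + ennreal (3/4) = ennreal (7/4)" using ennreal_plus[of 1 "3/4"] by simp
      show ?thesis by (auto simp: fun_eq_iff g_def indicator_def e74)
    qed
    then have "(\<integral>\<^sup>+ a. ennreal (g a) \<partial>lborel) = (\<integral>\<^sup>+ a. indicator {-\<sigma>..\<sigma>} a \<partial>lborel) + (\<integral>\<^sup>+ a. ennreal (3/4) * indicator {-\<sigma>/2..\<sigma>/2} a \<partial>lborel)"
      by (simp add: nn_integral_add)
    also have "\<dots> = ennreal (2 * \<sigma>) + ennreal (3/4) * ennreal \<sigma>"
      using sg0 by (simp add: nn_integral_cmult_indicator)
    also have "\<dots> = ennreal (11/4 * \<sigma>)"
      using sg0 by (simp add: ennreal_mult[symmetric] ennreal_plus[symmetric] del: ennreal_plus)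
    finally show ?thesis .
  qed
  have "F 0 * ennreal (11/4 * \<sigma>) = (\<integral>\<^sup>+ a. ennreal (g a) * F 0 \<partial>lborel)"
  proof -
    have gm: "(\<lambda>a. ennreal (g a)) \<in> borel_measurable lborel" unfolding g_def by measurable
    show ?thesis unfolding gint[symmetric] using nn_integral_multc[OF gm, of "F 0"] by (simp add: mult.commute)
  qed
  also have "\<dots> \<le> (\<integral>\<^sup>+ a. (F a + F (-a)) \<partial>lborel)"
  proof (rule nn_integral_mono)
    fix a
    have "ennreal (g a) * F 0 \<le> ennreal (2 * exp (-(a^2) * (1/(2* vr)))) * F 0"
      using gle[OF vr0, of a] unfolding g_def \<sigma>_def by (intro mult_right_mono ennreal_leI) auto
    then show "ennreal (g a) * F 0 \<le> F a + F (-a)" using pair[of a] by (rule order_trans)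
  qed
  also have "\<dots> = ennreal (4 * \<epsilon>)" by (rule sum)
  finally have ineq: "F 0 * ennreal (11/4 * \<sigma>) \<le> ennreal (4 * \<epsilon>)" .
  define r where "r = measure M {\<omega> \<in> space M. \<bar>u \<bullet> Y \<omega>\<bar> \<le> \<epsilon>}"
  have Er: "emeasure M {\<omega> \<in> space M. \<bar>u \<bullet> Y \<omega>\<bar> \<le> \<epsilon>} = ennreal r"
  proof -
    interpret prob_space M by (rule P)
    show ?thesis unfolding r_def by (simp add: emeasure_eq_measure)
  qed
  have r0: "r \<ge> 0" unfolding r_def by simp
  have "ennreal (r * (11/4 * \<sigma>)) \<le> ennreal (4 * \<epsilon>)"
  proof -
    have "F 0 = ennreal r" using E0 Er by simp
    then have "ennreal (r * (11/4 * \<sigma>)) = F 0 * ennreal (11/4 * \<sigma>)"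
      using r0 sg0 ennreal_mult[of r "11/4 * \<sigma>"] by simp
    then show ?thesis using ineq by simp
  qed
  then have "r * (11/4 * \<sigma>) \<le> 4 * \<epsilon>" using e by (simp add: ennreal_le_iff)
  then have "r \<le> 16 * \<epsilon> / (11 * \<sigma>)" using sg0 by (simp add: field_simps)
  then show ?thesis unfolding Er \<sigma>_def by (rule ennreal_leI)
qed


lemma adj: "((A::real^'n^'m) *v x) \<bullet> y = x \<bullet> (transpose A *v y)"
proof -
  have "x \<bullet> (transpose A *v y) = x \<bullet> (y v* A)" by simp
  also have "\<dots> = (y v* A) \<bullet> x" by (rule inner_commute)
  also have "\<dots> = y \<bullet> (A *v x)" by (rule dot_lmul_matrix)
  also have "\<dots> = (A *v x) \<bullet> y" by (rule inner_commute)
  finally show ?thesis by (rule sym)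
qed

lemma normW:
  fixes W :: "real^'d^'c"
  assumes WW: "W ** transpose W = mat 1"
  shows "norm (W *v z) \<le> norm z"
proof -
  have n1: "norm (transpose W *v y) = norm y" for y :: "real^'c"
  proof -
    have WWy: "W *v (transpose W *v y) = y"
      by (simp only: matrix_vector_mul_assoc WW matrix_vector_mul_lid)
    have "(transpose W *v y) \<bullet> (transpose W *v y) = y \<bullet> (transpose (transpose W) *v (transpose W *v y))"
      by (rule adj)
    also have "\<dots> = y \<bullet> y" by (simp only: transpose_transpose WWy)
    finally have "(transpose W *v y) \<bullet> (transpose W *v y) = y \<bullet> y" .
    then show ?thesis by (simp add: norm_eq_sqrt_inner)
  qed
  have "norm (W *v z) ^ 2 = (W *v z) \<bullet> (W *v z)" by (simp add: power2_norm_eq_inner)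
  also have "\<dots> = z \<bullet> (transpose W *v (W *v z))" by (rule adj)
  also have "\<dots> \<le> norm z * norm (transpose W *v (W *v z))" by (rule norm_cauchy_schwarz)
  also have "\<dots> = norm z * norm (W *v z)" using n1 by simp
  finally have h: "norm (W *v z) * norm (W *v z) \<le> norm z * norm (W *v z)" by (simp add: power2_eq_square)
  show ?thesis
  proof (cases "norm (W *v z) = 0")
    case True then show ?thesis by simp
  next
    case False then show ?thesis using h by (simp add: mult_le_cancel_right)
  qed
qed

lemma row_unit:
  fixes R :: "real^'c^'c"
  assumes "orthogonal_matrix R"
  shows "R $ i \<bullet> R $ i = 1"
proof -
  have "R ** transpose R = mat 1" using assms unfolding orthogonal_matrix_def by simp
  then have "(R ** transpose R) $ i $ i = 1" by (simp add: mat_def)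
  then show ?thesis unfolding matrix_mult_transpose_dot_row by (simp add: row_def vec_lambda_eta)
qed

lemma diag_quad:
  fixes R S :: "real^'c^'c"
  shows "(R ** S ** transpose R) $ i $ i = R $ i \<bullet> (S *v R $ i)"
proof -
  have "(R ** S ** transpose R) $ i $ i = (\<Sum>k\<in>UNIV. (\<Sum>n\<in>UNIV. R$i$n * S$n$k) * R$i$k)"
    by (simp add: matrix_matrix_mult_def transpose_def)
  also have "\<dots> = (\<Sum>k\<in>UNIV. \<Sum>n\<in>UNIV. R$i$n * S$n$k * R$i$k)"
    by (simp add: sum_distrib_right)
  also have "\<dots> = (\<Sum>n\<in>UNIV. \<Sum>k\<in>UNIV. R$i$n * S$n$k * R$i$k)"
    by (rule sum.swap)
  also have "\<dots> = (\<Sum>n\<in>UNIV. R$i$n * (\<Sum>k\<in>UNIV. S$n$k * R$i$k))"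
    by (simp add: sum_distrib_left mult.assoc)
  also have "\<dots> = R $ i \<bullet> (S *v R $ i)"
    by (simp add: inner_vec_def matrix_vector_mult_def)
  finally show ?thesis .
qed

lemma const_ineq:
  fixes c T e :: real
  assumes "c > 0" "T > 0" "e > 0"
  shows "c * (16 * e / (11 * sqrt (T / c))) \<le> 2 * e * sqrt (2 / pi) * c powr (3/2) * T powr (-1/2)"
proof -
  have p1: "c powr (3/2) = c * sqrt c"
  proof -
    have "c powr (3/2) = c powr (1 + 1/2)" by simp
    also have "\<dots> = c powr 1 * c powr (1/2)" by (rule powr_add)
    finally show ?thesis using assms by (simp add: powr_half_sqrt)
  qed
  have p2: "T powr (-1/2) = 1 / sqrt T"
  proof -
    have "T powr (-1/2) = T powr (-(1/2))" by simp
    also have "\<dots> = inverse (T powr (1/2))" by (rule powr_minus)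
    also have "\<dots> = inverse (sqrt T)" using assms by (simp add: powr_half_sqrt)
    finally show ?thesis by (simp add: inverse_eq_divide)
  qed
  have s: "8/11 \<le> sqrt (2/pi)"
  proof (rule real_le_rsqrt)
    have "pi \<le> 3.1415926535899" by (rule pi_approx(2))
    then have "2 / 3.1415926535899 \<le> 2 / pi" using pi_gt_zero by (intro divide_left_mono) auto
    moreover have "(8/11::real)^2 \<le> 2 / 3.1415926535899" by (simp add: power2_eq_square)
    ultimately show "(8/11)^2 \<le> 2/pi" by linarith
  qed
  have "c * (16 * e / (11 * sqrt (T / c))) = (8/11) * (2 * e * c * sqrt c / sqrt T)"
  proof -
    have q: "sqrt (T / c) = sqrt T / sqrt c" by (rule real_sqrt_divide)
    have "sqrt c > 0" "sqrt T > 0" using assms by auto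
    then show ?thesis unfolding q by (simp add: field_simps)
  qed
  also have "\<dots> \<le> sqrt (2/pi) * (2 * e * c * sqrt c / sqrt T)"
    using s assms by (intro mult_right_mono) auto
  also have "\<dots> = 2 * e * sqrt (2 / pi) * c powr (3/2) * T powr (-1/2)"
    unfolding p1 p2 by simp
  finally show ?thesis .
qed


theorem theorem2:
  fixes M :: "'a measure"
    and W :: "real^'d^'c" and S :: "real^'c^'c" and R :: "real^'c^'c"
    and \<epsilon> :: real and x1 x2 :: "'a \<Rightarrow> real^'d"
  assumes "prob_space M"
    and "CARD('c) \<le> CARD('d)"
    and "W ** transpose W = mat 1"
    and "pos_def_matrix S"
    and "orthogonal_matrix R"
    and "\<forall>i. (R ** S ** transpose R) $ i $ i = trace S / real CARD('c)"
    and "\<epsilon> > 0"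
    and "x1 \<in> borel_measurable M" and "x2 \<in> borel_measurable M"
    and "has_normal_law M (\<lambda>\<omega>. W *v x1 \<omega>) S"
    and "has_normal_law M (\<lambda>\<omega>. W *v x2 \<omega>) S"
    and "AE \<omega> in M. norm (x1 \<omega> - x2 \<omega>) \<le> \<epsilon>"
  shows "measure M {\<omega> \<in> space M.
            hamming_dist (sign_vec (R *v (W *v x1 \<omega>))) (sign_vec (R *v (W *v x2 \<omega>))) > 0}
         \<le> 2 * \<epsilon> * sqrt (2 / pi) * real CARD('c) powr (3/2) * trace S powr (-1/2)"
proof -
  note P = assms(1) and WW = assms(3) and Spd = assms(4) and Ro = assms(5) and tr = assms(6)
    and e = assms(7) and AEn = assms(12)
  interpret prob_space M by (rule P)
  define c where "c = real CARD('c)"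
  define T where "T = trace S"
  have c0: "c > 0" unfolding c_def by simp
  have D: "distributed M lborel (\<lambda>\<omega>. W *v x1 \<omega>) (\<lambda>y. ennreal (gaussian_density S y))"
    using assms(10) unfolding has_normal_law_def .
  have Ym[measurable]: "(\<lambda>\<omega>. W *v x1 \<omega>) \<in> borel_measurable M"
    using distributed_measurable[OF D] by simp
  have vri: "R $ i \<bullet> (S *v R $ i) = T / c" for i
    using tr diag_quad[of R S i] unfolding T_def c_def by simp
  have vrpos: "T / c > 0"
  proof -
    obtain i :: 'c where True by simp
    have "R $ i \<noteq> 0" using row_unit[OF Ro, of i] by auto
    then have "R $ i \<bullet> (S *v R $ i) > 0" using Spd unfolding pos_def_matrix_def by blast
    then show ?thesis using vri by simp
  qed
  have T0: "T > 0" using vrpos c0 by (simp add: zero_less_divide_iff)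
  define B where "B i = {\<omega> \<in> space M. \<bar>R $ i \<bullet> (W *v x1 \<omega>)\<bar> \<le> \<epsilon>}" for i
  have Bs: "B i \<in> sets M" for i unfolding B_def by measurable
  have Bb: "measure M (B i) \<le> 16 * \<epsilon> / (11 * sqrt (T / c))" for i
  proof -
    have "emeasure M (B i) \<le> ennreal (16 * \<epsilon> / (11 * sqrt (T / c)))"
      unfolding B_def by (rule core[OF P Spd D vri[symmetric] vrpos e])
    then show ?thesis using e vrpos by (simp add: emeasure_eq_measure ennreal_le_iff)
  qed
  have incl: "AE \<omega> in M. \<omega> \<in> {\<omega> \<in> space M.
            hamming_dist (sign_vec (R *v (W *v x1 \<omega>))) (sign_vec (R *v (W *v x2 \<omega>))) > 0}
           \<longrightarrow> \<omega> \<in> (\<Union>i\<in>UNIV. B i)"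
    using AEn
  proof (rule AE_mp, intro AE_I2 impI)
    fix \<omega> assume \<omega>: "\<omega> \<in> space M" and nrm: "norm (x1 \<omega> - x2 \<omega>) \<le> \<epsilon>"
      and H: "\<omega> \<in> {\<omega> \<in> space M.
            hamming_dist (sign_vec (R *v (W *v x1 \<omega>))) (sign_vec (R *v (W *v x2 \<omega>))) > 0}"
    then obtain i where i: "sign_vec (R *v (W *v x1 \<omega>)) $ i \<noteq> sign_vec (R *v (W *v x2 \<omega>)) $ i"
      unfolding hamming_dist_def by (auto simp: card_gt_0_iff)
    define a where "a = R $ i \<bullet> (W *v x1 \<omega>)"
    define b where "b = R $ i \<bullet> (W *v x2 \<omega>)"
    have ab: "(a \<ge> 0) \<noteq> (b \<ge> 0)" using i unfolding a_def b_def sign_vec_def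
      by (auto simp: matrix_vector_mul_component split: if_splits)
    have "\<bar>a - b\<bar> = \<bar>R $ i \<bullet> (W *v (x1 \<omega> - x2 \<omega>))\<bar>"
      unfolding a_def b_def by (simp add: matrix_vector_mult_diff_distrib inner_diff_right)
    also have "\<dots> \<le> norm (R $ i) * norm (W *v (x1 \<omega> - x2 \<omega>))" by (rule Cauchy_Schwarz_ineq2)
    also have "norm (R $ i) = 1" using row_unit[OF Ro, of i] by (simp add: norm_eq_sqrt_inner)
    also have "1 * norm (W *v (x1 \<omega> - x2 \<omega>)) \<le> \<epsilon>" using normW[OF WW, of "x1 \<omega> - x2 \<omega>"] nrm by simp
    finally have "\<bar>a - b\<bar> \<le> \<epsilon>" .
    then have "\<bar>a\<bar> \<le> \<epsilon>" using ab by auto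
    then show "\<omega> \<in> (\<Union>i\<in>UNIV. B i)" using \<omega> unfolding B_def a_def by auto
  qed
  have "measure M {\<omega> \<in> space M.
            hamming_dist (sign_vec (R *v (W *v x1 \<omega>))) (sign_vec (R *v (W *v x2 \<omega>))) > 0}
        \<le> measure M (\<Union>i\<in>UNIV. B i)"
    by (rule finite_measure_mono_AE[OF incl]) (use Bs in auto)
  also have "\<dots> \<le> (\<Sum>i\<in>UNIV. measure M (B i))"
    by (rule finite_measure_subadditive_finite) (use Bs in auto)
  also have "\<dots> \<le> (\<Sum>i\<in>(UNIV::'c set). 16 * \<epsilon> / (11 * sqrt (T / c)))"
    by (rule sum_mono) (rule Bb)
  also have "\<dots> = c * (16 * \<epsilon> / (11 * sqrt (T / c)))" unfolding c_def by simp
  also have "\<dots> \<le> 2 * \<epsilon> * sqrt (2 / pi) * c powr (3/2) * T powr (-1/2)"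
    by (rule const_ineq[OF c0 T0 e])
  finally show ?thesis unfolding c_def T_def .
qed

end
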